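(* For every integer $c\ge 1$, the functor $G\mapsto G/\Gamma_{c+1}(G)$ on groups is conditionally flat. In other words, if $1\to K\to G\to Q\to 1$ is an extension such that $1\to K/\Gamma_{c+1}K\to G/\Gamma_{c+1}G\to Q/\Gamma_{c+1}Q\to 1$ is again a short exact sequence, then for every homomorphism $X\to Q$ the pullback extension $1\to K\to G\times_Q X\to X\to 1$ has the same property.
   Context: The lower central series of a group $G$ is $\Gamma_1(G)=G$, $\Gamma_{i+1}(G)=[\Gamma_i(G),G]$; so $G/\Gamma_{c+1}(G)$ is the largest quotient of $G$ that is nilpotent of class at most $c$ (for $c=1$ this is the abelianization). A functor $L$ on groups is conditionally flat if for every extension $1\to N\to E\to Q\to 1$ such that $1\to LN\to LE\to LQ\to 1$ is short exact, and every homomorphism $Q'\to Q$, the pullback extension $1\to N\to E\times_Q Q'\to Q'\to 1$ also becomes short exact after applying $L$. *)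

theory Defs
  imports "HOL-Algebra.Algebra"
begin

text \<open>Lower central series, indexed as in the paper: lcs G 1 = carrier G,
  lcs G (i+1) = [lcs G i, G] (subgroup generated by the commutators).
  We set lcs G 0 = carrier G as a harmless convention.\<close>
fun lcs :: "('a, 'm) monoid_scheme \<Rightarrow> nat \<Rightarrow> 'a set" where
  "lcs G 0 = carrier G"
| "lcs G (Suc 0) = carrier G"
| "lcs G (Suc (Suc i)) = generate G
     {x \<otimes>\<^bsub>G\<^esub> y \<otimes>\<^bsub>G\<^esub> inv\<^bsub>G\<^esub> x \<otimes>\<^bsub>G\<^esub> inv\<^bsub>G\<^esub> y | x y.
        x \<in> lcs G (Suc i) \<and> y \<in> carrier G}"

definition nilq :: "nat \<Rightarrow> ('a, 'm) monoid_scheme \<Rightarrow> 'a set monoid" where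
  "nilq c G = G Mod (lcs G (Suc c))"

definition nilq_map :: "nat \<Rightarrow> ('a, 'm) monoid_scheme \<Rightarrow> ('b, 'n) monoid_scheme
    \<Rightarrow> ('a \<Rightarrow> 'b) \<Rightarrow> 'a set \<Rightarrow> 'b set" where
  "nilq_map c G H f = (\<lambda>C. \<Union>x\<in>C. lcs H (Suc c) #>\<^bsub>H\<^esub> f x)"

definition short_exact ::
  "('a, 'm) monoid_scheme \<Rightarrow> ('b, 'n) monoid_scheme \<Rightarrow> ('c, 'o) monoid_scheme
    \<Rightarrow> ('a \<Rightarrow> 'b) \<Rightarrow> ('b \<Rightarrow> 'c) \<Rightarrow> bool" where
  "short_exact N E Q \<iota> p \<longleftrightarrow> group N \<and> group E \<and> group Q \<and>
     \<iota> \<in> mon N E \<and> p \<in> epi E Q \<and> \<iota> ` carrier N = kernel E Q p"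

definition pullback ::
  "('b, 'n) monoid_scheme \<Rightarrow> ('d, 'p) monoid_scheme \<Rightarrow> ('b \<Rightarrow> 'c) \<Rightarrow> ('d \<Rightarrow> 'c)
    \<Rightarrow> ('b \<times> 'd) monoid" where
  "pullback E Y p f = (DirProd E Y)\<lparr>carrier := {(e, x). e \<in> carrier E \<and> x \<in> carrier Y \<and> p e = f x}\<rparr>"

end

theory Submission
  imports Defs
begin

lemma lcs_normal:
  assumes "group G" shows "lcs G k \<lhd> G"
  using assms
proof (induction G k rule: lcs.induct)
  case (1 G) then show ?case by (simp add: group.normal_self)
next
  case (2 G) then show ?case by (simp add: group.normal_self)
next
  case (3 G i)
  interpret G: group G by fact
  interpret Hn: normal "lcs G (Suc i)" G using 3 by simp
  let ?S = "{x \<otimes>\<^bsub>G\<^esub> y \<otimes>\<^bsub>G\<^esub> inv\<^bsub>G\<^esub> x \<otimes>\<^bsub>G\<^esub> inv\<^bsub>G\<^esub> y | x y.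
        x \<in> lcs G (Suc i) \<and> y \<in> carrier G}"
  have sub: "?S \<subseteq> carrier G" using Hn.subset by blast
  have "generate G ?S \<lhd> G"
  proof (rule G.normal_generateI[OF sub])
    fix h g assume "h \<in> ?S" and g: "g \<in> carrier G"
    then obtain h1 h2 where h: "h1 \<in> lcs G (Suc i)" "h2 \<in> carrier G" "h = h1 \<otimes>\<^bsub>G\<^esub> h2 \<otimes>\<^bsub>G\<^esub> inv\<^bsub>G\<^esub> h1 \<otimes>\<^bsub>G\<^esub> inv\<^bsub>G\<^esub> h2"
      by auto
    hence in_carrier: "h1 \<in> carrier G" "h2 \<in> carrier G" "g \<in> carrier G"
      using Hn.subset g by auto
    have "g \<otimes>\<^bsub>G\<^esub> h \<otimes>\<^bsub>G\<^esub> inv\<^bsub>G\<^esub> g =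
           g \<otimes>\<^bsub>G\<^esub> h1 \<otimes>\<^bsub>G\<^esub> (inv\<^bsub>G\<^esub> g \<otimes>\<^bsub>G\<^esub> g) \<otimes>\<^bsub>G\<^esub> h2 \<otimes>\<^bsub>G\<^esub> (inv\<^bsub>G\<^esub> g \<otimes>\<^bsub>G\<^esub> g) \<otimes>\<^bsub>G\<^esub> inv\<^bsub>G\<^esub> h1 \<otimes>\<^bsub>G\<^esub> (inv\<^bsub>G\<^esub> g \<otimes>\<^bsub>G\<^esub> g) \<otimes>\<^bsub>G\<^esub> inv\<^bsub>G\<^esub> h2 \<otimes>\<^bsub>G\<^esub> inv\<^bsub>G\<^esub> g"
      unfolding h(3) by (simp add: in_carrier G.m_assoc)
    also have " ... =
          (g \<otimes>\<^bsub>G\<^esub> h1 \<otimes>\<^bsub>G\<^esub> inv\<^bsub>G\<^esub> g) \<otimes>\<^bsub>G\<^esub> (g \<otimes>\<^bsub>G\<^esub> h2 \<otimes>\<^bsub>G\<^esub> inv\<^bsub>G\<^esub> g) \<otimes>\<^bsub>G\<^esub> (g \<otimes>\<^bsub>G\<^esub> inv\<^bsub>G\<^esub> h1 \<otimes>\<^bsub>G\<^esub> inv\<^bsub>G\<^esub> g) \<otimes>\<^bsub>G\<^esub> (g \<otimes>\<^bsub>G\<^esub> inv\<^bsub>G\<^esub> h2 \<otimes>\<^bsub>G\<^esub> inv\<^bsub>G\<^esub> g)"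
      using in_carrier G.m_assoc G.inv_closed G.m_closed by presburger
    finally have "g \<otimes>\<^bsub>G\<^esub> h \<otimes>\<^bsub>G\<^esub> inv\<^bsub>G\<^esub> g =
          (g \<otimes>\<^bsub>G\<^esub> h1 \<otimes>\<^bsub>G\<^esub> inv\<^bsub>G\<^esub> g) \<otimes>\<^bsub>G\<^esub> (g \<otimes>\<^bsub>G\<^esub> h2 \<otimes>\<^bsub>G\<^esub> inv\<^bsub>G\<^esub> g) \<otimes>\<^bsub>G\<^esub> inv\<^bsub>G\<^esub> (g \<otimes>\<^bsub>G\<^esub> h1 \<otimes>\<^bsub>G\<^esub> inv\<^bsub>G\<^esub> g) \<otimes>\<^bsub>G\<^esub> inv\<^bsub>G\<^esub> (g \<otimes>\<^bsub>G\<^esub> h2 \<otimes>\<^bsub>G\<^esub> inv\<^bsub>G\<^esub> g)"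
      by (simp add: in_carrier G.inv_mult_group G.m_assoc)
    moreover have "g \<otimes>\<^bsub>G\<^esub> h1 \<otimes>\<^bsub>G\<^esub> inv\<^bsub>G\<^esub> g \<in> lcs G (Suc i)"
      using Hn.inv_op_closed2[OF g h(1)] .
    moreover have "g \<otimes>\<^bsub>G\<^esub> h2 \<otimes>\<^bsub>G\<^esub> inv\<^bsub>G\<^esub> g \<in> carrier G" using in_carrier by simp
    ultimately show "g \<otimes>\<^bsub>G\<^esub> h \<otimes>\<^bsub>G\<^esub> inv\<^bsub>G\<^esub> g \<in> ?S" by blast
  qed
  then show ?case by simp
qed

lemma lcs_sub: "group G \<Longrightarrow> lcs G k \<subseteq> carrier G"
  using lcs_normal normal_imp_subgroup subgroup.subset by blast

lemma lcs_hom: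
  assumes "group G" "group H" "h \<in> hom G H"
  shows "h ` lcs G k \<subseteq> lcs H k \<and> (h ` carrier G = carrier H \<longrightarrow> h ` lcs G k = lcs H k)"
  using assms
proof (induction G k rule: lcs.induct)
  case (1 G) then show ?case by (auto simp: hom_def)
next
  case (2 G) then show ?case by (auto simp: hom_def)
next
  case (3 G i)
  interpret gh: group_hom G H h using 3 by (simp add: group_hom_def group_hom_axioms_def)
  let ?S = "{x \<otimes>\<^bsub>G\<^esub> y \<otimes>\<^bsub>G\<^esub> inv\<^bsub>G\<^esub> x \<otimes>\<^bsub>G\<^esub> inv\<^bsub>G\<^esub> y | x y.
        x \<in> lcs G (Suc i) \<and> y \<in> carrier G}"
  let ?T = "{x \<otimes>\<^bsub>H\<^esub> y \<otimes>\<^bsub>H\<^esub> inv\<^bsub>H\<^esub> x \<otimes>\<^bsub>H\<^esub> inv\<^bsub>H\<^esub> y | x y.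
        x \<in> lcs H (Suc i) \<and> y \<in> carrier H}"
  have subG: "lcs G (Suc i) \<subseteq> carrier G" using lcs_sub 3 by blast
  have sub: "?S \<subseteq> carrier G" using subG by blast
  have img: "h ` ?S = {x \<otimes>\<^bsub>H\<^esub> y \<otimes>\<^bsub>H\<^esub> inv\<^bsub>H\<^esub> x \<otimes>\<^bsub>H\<^esub> inv\<^bsub>H\<^esub> y | x y.
        x \<in> h ` lcs G (Suc i) \<and> y \<in> h ` carrier G}" (is "_ = ?R")
  proof
    show "h ` ?S \<subseteq> ?R"
    proof
      fix a assume "a \<in> h ` ?S"
      then obtain s where s: "s \<in> ?S" "a = h s" by blast
      then obtain x y where xy: "x \<in> lcs G (Suc i)" "y \<in> carrier G"
        "a = h (x \<otimes>\<^bsub>G\<^esub> y \<otimes>\<^bsub>G\<^esub> inv\<^bsub>G\<^esub> x \<otimes>\<^bsub>G\<^esub> inv\<^bsub>G\<^esub> y)" by blast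
      have "x \<in> carrier G" using xy subG by blast
      then have eqa: "a = h x \<otimes>\<^bsub>H\<^esub> h y \<otimes>\<^bsub>H\<^esub> inv\<^bsub>H\<^esub> h x \<otimes>\<^bsub>H\<^esub> inv\<^bsub>H\<^esub> h y"
        using xy by simp
      show "a \<in> {x \<otimes>\<^bsub>H\<^esub> y \<otimes>\<^bsub>H\<^esub> inv\<^bsub>H\<^esub> x \<otimes>\<^bsub>H\<^esub> inv\<^bsub>H\<^esub> y | x y.
        x \<in> h ` lcs G (Suc i) \<and> y \<in> h ` carrier G}"
        apply (rule CollectI, rule exI[of _ "h x"], rule exI[of _ "h y"]) using xy eqa by auto
    qed
  next
    show "?R \<subseteq> h ` ?S"
    proof
      fix a assume "a \<in> {x \<otimes>\<^bsub>H\<^esub> y \<otimes>\<^bsub>H\<^esub> inv\<^bsub>H\<^esub> x \<otimes>\<^bsub>H\<^esub> inv\<^bsub>H\<^esub> y | x y.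
        x \<in> h ` lcs G (Suc i) \<and> y \<in> h ` carrier G}"
      then obtain x y where xy: "x \<in> lcs G (Suc i)" "y \<in> carrier G"
        "a = h x \<otimes>\<^bsub>H\<^esub> h y \<otimes>\<^bsub>H\<^esub> inv\<^bsub>H\<^esub> h x \<otimes>\<^bsub>H\<^esub> inv\<^bsub>H\<^esub> h y" by blast
      have "x \<in> carrier G" using xy subG by blast
      then have "a = h (x \<otimes>\<^bsub>G\<^esub> y \<otimes>\<^bsub>G\<^esub> inv\<^bsub>G\<^esub> x \<otimes>\<^bsub>G\<^esub> inv\<^bsub>G\<^esub> y)"
        using xy by simp
      moreover have "x \<otimes>\<^bsub>G\<^esub> y \<otimes>\<^bsub>G\<^esub> inv\<^bsub>G\<^esub> x \<otimes>\<^bsub>G\<^esub> inv\<^bsub>G\<^esub> y \<in> ?S" using xy by blast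
      ultimately show "a \<in> h ` ?S" by (rule image_eqI)
    qed
  qed
  have gen: "h ` generate G ?S = generate H (h ` ?S)"
    using gh.generate_img[OF sub] by simp
  have IH: "h ` lcs G (Suc i) \<subseteq> lcs H (Suc i)"
    "h ` carrier G = carrier H \<longrightarrow> h ` lcs G (Suc i) = lcs H (Suc i)" using 3 by auto
  have "h ` ?S \<subseteq> ?T" unfolding img
  proof
    fix a assume "a \<in> {x \<otimes>\<^bsub>H\<^esub> y \<otimes>\<^bsub>H\<^esub> inv\<^bsub>H\<^esub> x \<otimes>\<^bsub>H\<^esub> inv\<^bsub>H\<^esub> y | x y.
        x \<in> h ` lcs G (Suc i) \<and> y \<in> h ` carrier G}"
    then obtain x y where xy: "x \<in> h ` lcs G (Suc i)" "y \<in> h ` carrier G"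
        "a = x \<otimes>\<^bsub>H\<^esub> y \<otimes>\<^bsub>H\<^esub> inv\<^bsub>H\<^esub> x \<otimes>\<^bsub>H\<^esub> inv\<^bsub>H\<^esub> y" by blast
    have "x \<in> lcs H (Suc i)" using xy(1) IH(1) by blast
    moreover have "y \<in> carrier H" using xy(2) gh.hom_closed by blast
    ultimately show "a \<in> ?T" using xy(3) by blast
  qed
  then have A: "h ` lcs G (Suc (Suc i)) \<subseteq> lcs H (Suc (Suc i))"
    using gen gh.H.mono_generate by simp
  have B: "h ` lcs G (Suc (Suc i)) = lcs H (Suc (Suc i))" if s: "h ` carrier G = carrier H"
  proof -
    have "h ` ?S = ?T" unfolding img using IH(2) s by simp
    then show ?thesis using gen by simp
  qed
  show ?case using A B by blast
qed

lemma nilq_map_coset: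
  assumes "group G" "group H" "h \<in> hom G H" "g \<in> carrier G"
  shows "nilq_map c G H h (lcs G (Suc c) #>\<^bsub>G\<^esub> g) = lcs H (Suc c) #>\<^bsub>H\<^esub> h g"
proof -
  interpret gh: group_hom G H h using assms by (simp add: group_hom_def group_hom_axioms_def)
  let ?A = "lcs G (Suc c)" and ?B = "lcs H (Suc c)"
  have sA: "subgroup ?A G" using lcs_normal assms normal_imp_subgroup by blast
  have sB: "subgroup ?B H" using lcs_normal assms normal_imp_subgroup by blast
  have img: "h ` ?A \<subseteq> ?B" using lcs_hom assms by blast
  have eq: "?B #>\<^bsub>H\<^esub> h x = ?B #>\<^bsub>H\<^esub> h g" if x: "x \<in> ?A #>\<^bsub>G\<^esub> g" for x
  proof -
    obtain a where a: "a \<in> ?A" "x = a \<otimes>\<^bsub>G\<^esub> g" using x unfolding r_coset_def by blast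
    have ac: "a \<in> carrier G" using a sA subgroup.subset by blast
    have "h x = h a \<otimes>\<^bsub>H\<^esub> h g" using a ac assms by simp
    moreover have "h a \<in> ?B" using img a by blast
    ultimately show ?thesis
      using gh.H.coset_mult_assoc[of ?B "h a" "h g"] gh.H.coset_join2[of "h a" ?B] sB
        subgroup.subset[OF sB] ac assms(4) by simp
  qed
  have ne: "?A #>\<^bsub>G\<^esub> g \<noteq> {}" using gh.G.rcos_self[OF assms(4) sA] by blast
  have "nilq_map c G H h (?A #>\<^bsub>G\<^esub> g) = (\<Union>x\<in>?A #>\<^bsub>G\<^esub> g. ?B #>\<^bsub>H\<^esub> h g)"
    unfolding nilq_map_def using eq by simp
  also have "\<dots> = ?B #>\<^bsub>H\<^esub> h g" using ne by simp
  finally show ?thesis .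
qed

lemma nilq_group: "group G \<Longrightarrow> group (nilq c G)"
  unfolding nilq_def using lcs_normal normal.factorgroup_is_group by blast

lemma nilq_carrier: "carrier (nilq c G) = (\<lambda>x. lcs G (Suc c) #>\<^bsub>G\<^esub> x) ` carrier G"
  unfolding nilq_def by (simp add: carrier_FactGroup)

lemma nilq_one: "\<one>\<^bsub>nilq c G\<^esub> = lcs G (Suc c)"
  unfolding nilq_def by simp

lemma nilq_map_hom:
  assumes "group G" "group H" "h \<in> hom G H"
  shows "nilq_map c G H h \<in> hom (nilq c G) (nilq c H)"
proof (rule homI)
  interpret gh: group_hom G H h using assms by (simp add: group_hom_def group_hom_axioms_def)
  interpret nA: normal "lcs G (Suc c)" G using lcs_normal assms by blast
  interpret nB: normal "lcs H (Suc c)" H using lcs_normal assms by blast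
  fix C assume "C \<in> carrier (nilq c G)"
  then obtain g where g: "g \<in> carrier G" "C = lcs G (Suc c) #>\<^bsub>G\<^esub> g" unfolding nilq_carrier by blast
  show "nilq_map c G H h C \<in> carrier (nilq c H)"
    unfolding g(2) nilq_map_coset[OF assms g(1)] nilq_carrier using g(1) by simp
next
  interpret gh: group_hom G H h using assms by (simp add: group_hom_def group_hom_axioms_def)
  interpret nA: normal "lcs G (Suc c)" G using lcs_normal assms by blast
  interpret nB: normal "lcs H (Suc c)" H using lcs_normal assms by blast
  fix C D assume "C \<in> carrier (nilq c G)" "D \<in> carrier (nilq c G)"
  then obtain g k where g: "g \<in> carrier G" "C = lcs G (Suc c) #>\<^bsub>G\<^esub> g"
    and k: "k \<in> carrier G" "D = lcs G (Suc c) #>\<^bsub>G\<^esub> k" unfolding nilq_carrier by blast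
  have "C \<otimes>\<^bsub>nilq c G\<^esub> D = lcs G (Suc c) #>\<^bsub>G\<^esub> (g \<otimes>\<^bsub>G\<^esub> k)"
    unfolding g k nilq_def using nA.rcos_sum g k by simp
  then have "nilq_map c G H h (C \<otimes>\<^bsub>nilq c G\<^esub> D) = lcs H (Suc c) #>\<^bsub>H\<^esub> (h g \<otimes>\<^bsub>H\<^esub> h k)"
    using nilq_map_coset[OF assms, of "g \<otimes>\<^bsub>G\<^esub> k"] g k by simp
  also have "\<dots> = nilq_map c G H h C \<otimes>\<^bsub>nilq c H\<^esub> nilq_map c G H h D"
    unfolding g k nilq_map_coset[OF assms g(1)] nilq_map_coset[OF assms k(1)] nilq_def
    using nB.rcos_sum g k by simp
  finally show "nilq_map c G H h (C \<otimes>\<^bsub>nilq c G\<^esub> D) = nilq_map c G H h C \<otimes>\<^bsub>nilq c H\<^esub> nilq_map c G H h D" .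
qed

lemma rcos_eq_iff:
  assumes "group G" "subgroup A G" "a \<in> carrier G" "b \<in> carrier G"
  shows "A #>\<^bsub>G\<^esub> a = A #>\<^bsub>G\<^esub> b \<longleftrightarrow> a \<otimes>\<^bsub>G\<^esub> inv\<^bsub>G\<^esub> b \<in> A"
proof -
  have s: "A \<subseteq> carrier G" using assms(2) by (rule subgroup.subset)
  have c: "a \<otimes>\<^bsub>G\<^esub> inv\<^bsub>G\<^esub> b \<in> carrier G"
    using assms(1,3,4) by (simp add: group.inv_closed monoid.m_closed group.is_monoid)
  show ?thesis
  proof
    assume h: "A #>\<^bsub>G\<^esub> a = A #>\<^bsub>G\<^esub> b"
    have "A #>\<^bsub>G\<^esub> (a \<otimes>\<^bsub>G\<^esub> inv\<^bsub>G\<^esub> b) = A"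
      by (rule group.coset_mult_inv2[OF assms(1) h assms(3,4) s])
    then show "a \<otimes>\<^bsub>G\<^esub> inv\<^bsub>G\<^esub> b \<in> A"
      by (rule group.coset_join1[OF assms(1) _ c assms(2)])
  next
    assume h: "a \<otimes>\<^bsub>G\<^esub> inv\<^bsub>G\<^esub> b \<in> A"
    have "A #>\<^bsub>G\<^esub> (a \<otimes>\<^bsub>G\<^esub> inv\<^bsub>G\<^esub> b) = A"
      by (rule group.coset_join2[OF assms(1) c assms(2) h])
    then show "A #>\<^bsub>G\<^esub> a = A #>\<^bsub>G\<^esub> b"
      by (rule group.coset_mult_inv1[OF assms(1) _ assms(3,4) s])
  qed
qed

lemma pullback_group:
  assumes "group E" "group Y" "group Q" "p \<in> hom E Q" "f \<in> hom Y Q"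
  shows "subgroup (carrier (pullback E Y p f)) (E \<times>\<times> Y)"
    and "group (pullback E Y p f)"
    and "\<And>x y. x \<otimes>\<^bsub>pullback E Y p f\<^esub> y = x \<otimes>\<^bsub>E \<times>\<times> Y\<^esub> y"
    and "\<one>\<^bsub>pullback E Y p f\<^esub> = (\<one>\<^bsub>E\<^esub>, \<one>\<^bsub>Y\<^esub>)"
    and "\<And>e y. (e, y) \<in> carrier (pullback E Y p f) \<Longrightarrow> inv\<^bsub>pullback E Y p f\<^esub> (e, y) = (inv\<^bsub>E\<^esub> e, inv\<^bsub>Y\<^esub> y)"
    and "carrier (pullback E Y p f) = {(e, x). e \<in> carrier E \<and> x \<in> carrier Y \<and> p e = f x}"
proof -
  interpret hp: group_hom E Q p using assms by (simp add: group_hom_def group_hom_axioms_def)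
  interpret hf: group_hom Y Q f using assms by (simp add: group_hom_def group_hom_axioms_def)
  have DG: "group (E \<times>\<times> Y)" using DirProd_group assms by blast
  let ?S = "{(e, x). e \<in> carrier E \<and> x \<in> carrier Y \<and> p e = f x}"
  show cP: "carrier (pullback E Y p f) = ?S" unfolding pullback_def by simp
  have sg: "subgroup ?S (E \<times>\<times> Y)"
  proof (rule group.subgroupI[OF DG])
    show "?S \<subseteq> carrier (E \<times>\<times> Y)" by auto
    have "(\<one>\<^bsub>E\<^esub>, \<one>\<^bsub>Y\<^esub>) \<in> ?S" by simp
    then show "?S \<noteq> {}" by blast
  next
    fix a assume "a \<in> ?S"
    then obtain e y where a: "a = (e, y)" "e \<in> carrier E" "y \<in> carrier Y" "p e = f y" by (cases a) auto
    then show "inv\<^bsub>E \<times>\<times> Y\<^esub> a \<in> ?S" using inv_DirProd[OF assms(1,2)] by simp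
  next
    fix a b assume "a \<in> ?S" "b \<in> ?S"
    then obtain e y e' y' where a: "a = (e, y)" "e \<in> carrier E" "y \<in> carrier Y" "p e = f y"
      and b: "b = (e', y')" "e' \<in> carrier E" "y' \<in> carrier Y" "p e' = f y'"
      by (cases a, cases b) auto
    then show "a \<otimes>\<^bsub>E \<times>\<times> Y\<^esub> b \<in> ?S" by simp
  qed
  then show "subgroup (carrier (pullback E Y p f)) (E \<times>\<times> Y)" using cP by simp
  have Pdef: "pullback E Y p f = (E \<times>\<times> Y)\<lparr>carrier := ?S\<rparr>" unfolding pullback_def by simp
  show "group (pullback E Y p f)" unfolding Pdef using subgroup.subgroup_is_group[OF sg DG] .
  show "\<And>x y. x \<otimes>\<^bsub>pullback E Y p f\<^esub> y = x \<otimes>\<^bsub>E \<times>\<times> Y\<^esub> y" unfolding Pdef by simp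
  show "\<one>\<^bsub>pullback E Y p f\<^esub> = (\<one>\<^bsub>E\<^esub>, \<one>\<^bsub>Y\<^esub>)" unfolding Pdef by simp
  fix e y assume "(e, y) \<in> carrier (pullback E Y p f)"
  then have ey: "(e, y) \<in> ?S" "e \<in> carrier E" "y \<in> carrier Y" using cP by auto
  have "inv\<^bsub>pullback E Y p f\<^esub> (e, y) = inv\<^bsub>E \<times>\<times> Y\<^esub> (e, y)"
    unfolding Pdef using group.m_inv_consistent[OF DG sg ey(1)] .
  then show "inv\<^bsub>pullback E Y p f\<^esub> (e, y) = (inv\<^bsub>E\<^esub> e, inv\<^bsub>Y\<^esub> y)"
    using inv_DirProd[OF assms(1,2) ey(2,3)] by simp
qed


theorem corollary3p7:
  fixes c :: nat
    and N :: "('a, 'm) monoid_scheme" and E :: "('b, 'n) monoid_scheme"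
    and Q :: "('c, 'o) monoid_scheme" and Y :: "('d, 'p) monoid_scheme"
    and i :: "'a \<Rightarrow> 'b" and p :: "'b \<Rightarrow> 'c" and f :: "'d \<Rightarrow> 'c"
  assumes "c \<ge> 1"
    and "short_exact N E Q i p"
    and "short_exact (nilq c N) (nilq c E) (nilq c Q) (nilq_map c N E i) (nilq_map c E Q p)"
    and "group Y" and "f \<in> hom Y Q"
  shows "short_exact (nilq c N) (nilq c (pullback E Y p f)) (nilq c Y)
           (nilq_map c N (pullback E Y p f) (\<lambda>n. (i n, \<one>\<^bsub>Y\<^esub>)))
           (nilq_map c (pullback E Y p f) Y snd)"
proof -
  let ?P = "pullback E Y p f"
  let ?j = "\<lambda>n. (i n, \<one>\<^bsub>Y\<^esub>)"
  have gN: "group N" and gE: "group E" and gQ: "group Q" and im: "i \<in> mon N E"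
    and pe: "p \<in> epi E Q" and ker: "i ` carrier N = kernel E Q p"
    using assms(2) unfolding short_exact_def by auto
  have gY: "group Y" by fact
  have ih: "i \<in> hom N E" using im unfolding mon_def by blast
  have ph: "p \<in> hom E Q" and ps: "p ` carrier E = carrier Q" using pe unfolding epi_def by auto
  have inj': "inj_on (nilq_map c N E i) (carrier (nilq c N))"
    using assms(3) unfolding short_exact_def mon_def by blast
  interpret hi: group_hom N E i using gN gE ih by (simp add: group_hom_def group_hom_axioms_def)
  interpret hp: group_hom E Q p using gE gQ ph by (simp add: group_hom_def group_hom_axioms_def)
  interpret hf: group_hom Y Q f using gY gQ assms(5) by (simp add: group_hom_def group_hom_axioms_def)
  note PG = pullback_group[OF gE gY gQ ph assms(5)]
  have gP: "group ?P" by (rule PG(2))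
  have cP: "carrier ?P = {(e, x). e \<in> carrier E \<and> x \<in> carrier Y \<and> p e = f x}" by (rule PG(6))
  have fstP: "fst \<in> hom ?P E"
    by (rule homI) (auto simp: cP PG(3) mult_DirProd')
  have sndP: "snd \<in> hom ?P Y"
    by (rule homI) (auto simp: cP PG(3) mult_DirProd')
  have sndS: "snd ` carrier ?P = carrier Y"
  proof
    show "snd ` carrier ?P \<subseteq> carrier Y" using cP by auto
  next
    show "carrier Y \<subseteq> snd ` carrier ?P"
    proof
      fix y assume y: "y \<in> carrier Y"
      then have "f y \<in> carrier Q" by simp
      then have "f y \<in> p ` carrier E" by (simp only: ps)
      then obtain e where e: "e \<in> carrier E" "f y = p e" by (rule imageE)
      then have "(e, y) \<in> carrier ?P" using cP y by simp
      then show "y \<in> snd ` carrier ?P" by (rule image_eqI[rotated]) simp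
    qed
  qed
  have kerI: "p (i n) = \<one>\<^bsub>Q\<^esub>" if "n \<in> carrier N" for n
    using ker that unfolding kernel_def by blast
  have jP: "?j n \<in> carrier ?P" if "n \<in> carrier N" for n
    using that kerI[OF that] cP by simp
  have jh: "?j \<in> hom N ?P"
  proof (rule homI)
    fix n assume "n \<in> carrier N" then show "?j n \<in> carrier ?P" by (rule jP)
  next
    fix a b assume "a \<in> carrier N" "b \<in> carrier N"
    then show "?j (a \<otimes>\<^bsub>N\<^esub> b) = ?j a \<otimes>\<^bsub>?P\<^esub> ?j b" by (simp add: PG(3) gY group.is_monoid)
  qed
  let ?GN = "lcs N (Suc c)" and ?GP = "lcs ?P (Suc c)" and ?GE = "lcs E (Suc c)" and ?GY = "lcs Y (Suc c)"
  have sGP: "subgroup ?GP ?P" and sGE: "subgroup ?GE E" and sGY: "subgroup ?GY Y" and sGN: "subgroup ?GN N"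
    using lcs_normal normal_imp_subgroup gP gE gY gN by blast+
  have fstG: "fst ` ?GP \<subseteq> ?GE" using lcs_hom[OF gP gE fstP] by blast
  have sndG: "snd ` ?GP = ?GY" using lcs_hom[OF gP gY sndP] sndS by blast
  interpret hj: group_hom N ?P ?j using gN gP jh by (simp add: group_hom_def group_hom_axioms_def)
  have mon: "nilq_map c N ?P ?j \<in> mon (nilq c N) (nilq c ?P)"
    unfolding mon_def
  proof (intro CollectI conjI)
    show "nilq_map c N ?P ?j \<in> hom (nilq c N) (nilq c ?P)" by (rule nilq_map_hom[OF gN gP jh])
    show "inj_on (nilq_map c N ?P ?j) (carrier (nilq c N))"
    proof (rule inj_onI)
      fix C D assume C: "C \<in> carrier (nilq c N)" and D: "D \<in> carrier (nilq c N)"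
        and eq: "nilq_map c N ?P ?j C = nilq_map c N ?P ?j D"
      obtain a where a: "a \<in> carrier N" "C = ?GN #>\<^bsub>N\<^esub> a" using C unfolding nilq_carrier by blast
      obtain b where b: "b \<in> carrier N" "D = ?GN #>\<^bsub>N\<^esub> b" using D unfolding nilq_carrier by blast
      have "?GP #>\<^bsub>?P\<^esub> ?j a = ?GP #>\<^bsub>?P\<^esub> ?j b"
        using eq unfolding a(2) b(2) nilq_map_coset[OF gN gP jh a(1)] nilq_map_coset[OF gN gP jh b(1)] .
      then have "?j a \<otimes>\<^bsub>?P\<^esub> inv\<^bsub>?P\<^esub> ?j b \<in> ?GP"
        using rcos_eq_iff[OF gP sGP jP[OF a(1)] jP[OF b(1)]] by blast
      moreover have "?j a \<otimes>\<^bsub>?P\<^esub> inv\<^bsub>?P\<^esub> ?j b = ?j (a \<otimes>\<^bsub>N\<^esub> inv\<^bsub>N\<^esub> b)"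
        using a(1) b(1) by (simp add: PG(3) PG(5)[OF jP[OF b(1)]])
      ultimately have "?j (a \<otimes>\<^bsub>N\<^esub> inv\<^bsub>N\<^esub> b) \<in> ?GP" by simp
      then have "fst (?j (a \<otimes>\<^bsub>N\<^esub> inv\<^bsub>N\<^esub> b)) \<in> fst ` ?GP" by (rule imageI)
      then have "i (a \<otimes>\<^bsub>N\<^esub> inv\<^bsub>N\<^esub> b) \<in> ?GE" using fstG by auto
      then have "i a \<otimes>\<^bsub>E\<^esub> inv\<^bsub>E\<^esub> i b \<in> ?GE" using a(1) b(1) by simp
      then have "?GE #>\<^bsub>E\<^esub> i a = ?GE #>\<^bsub>E\<^esub> i b"
        using rcos_eq_iff[OF gE sGE] a(1) b(1) by simp
      then have "nilq_map c N E i C = nilq_map c N E i D"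
        unfolding a(2) b(2) nilq_map_coset[OF gN gE ih a(1)] nilq_map_coset[OF gN gE ih b(1)] .
      then show "C = D" by (rule inj_onD[OF inj' _ C D])
    qed
  qed
  have epi: "nilq_map c ?P Y snd \<in> epi (nilq c ?P) (nilq c Y)"
    unfolding epi_def
  proof (intro CollectI conjI)
    show hs: "nilq_map c ?P Y snd \<in> hom (nilq c ?P) (nilq c Y)" by (rule nilq_map_hom[OF gP gY sndP])
    show "nilq_map c ?P Y snd ` carrier (nilq c ?P) = carrier (nilq c Y)"
    proof
      show "nilq_map c ?P Y snd ` carrier (nilq c ?P) \<subseteq> carrier (nilq c Y)"
        using hs unfolding hom_def by blast
    next
      show "carrier (nilq c Y) \<subseteq> nilq_map c ?P Y snd ` carrier (nilq c ?P)"
      proof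
        fix C assume "C \<in> carrier (nilq c Y)"
        then obtain y where y: "y \<in> carrier Y" "C = ?GY #>\<^bsub>Y\<^esub> y" unfolding nilq_carrier by blast
        have "y \<in> snd ` carrier ?P" using y(1) by (simp only: sndS)
        then obtain x where x: "x \<in> carrier ?P" "y = snd x" by (rule imageE)
        have "nilq_map c ?P Y snd (?GP #>\<^bsub>?P\<^esub> x) = C"
          using nilq_map_coset[OF gP gY sndP x(1)] x y by simp
        moreover have "?GP #>\<^bsub>?P\<^esub> x \<in> carrier (nilq c ?P)" unfolding nilq_carrier using x by blast
        ultimately show "C \<in> nilq_map c ?P Y snd ` carrier (nilq c ?P)" by blast
      qed
    qed
  qed
  have kk: "nilq_map c N ?P ?j ` carrier (nilq c N) = kernel (nilq c ?P) (nilq c Y) (nilq_map c ?P Y snd)"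
  proof
    show "nilq_map c N ?P ?j ` carrier (nilq c N) \<subseteq> kernel (nilq c ?P) (nilq c Y) (nilq_map c ?P Y snd)"
    proof
      fix D assume "D \<in> nilq_map c N ?P ?j ` carrier (nilq c N)"
      then obtain n where n: "n \<in> carrier N" "D = ?GP #>\<^bsub>?P\<^esub> ?j n"
        unfolding nilq_carrier using nilq_map_coset[OF gN gP jh] by auto
      have "D \<in> carrier (nilq c ?P)" unfolding nilq_carrier using n jP by blast
      moreover have "nilq_map c ?P Y snd D = ?GY"
        using nilq_map_coset[OF gP gY sndP jP[OF n(1)]] n group.coset_mult_one[OF gY]
          subgroup.subset[OF sGY] by simp
      ultimately show "D \<in> kernel (nilq c ?P) (nilq c Y) (nilq_map c ?P Y snd)"
        unfolding kernel_def nilq_one by blast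
    qed
  next
    show "kernel (nilq c ?P) (nilq c Y) (nilq_map c ?P Y snd) \<subseteq> nilq_map c N ?P ?j ` carrier (nilq c N)"
    proof
      fix D assume "D \<in> kernel (nilq c ?P) (nilq c Y) (nilq_map c ?P Y snd)"
      then have D: "D \<in> carrier (nilq c ?P)" "nilq_map c ?P Y snd D = ?GY"
        unfolding kernel_def nilq_one by auto
      obtain x where x: "x \<in> carrier ?P" "D = ?GP #>\<^bsub>?P\<^esub> x" using D(1) unfolding nilq_carrier by blast
      obtain e y where ey: "x = (e, y)" by (cases x)
      have ec: "e \<in> carrier E" "y \<in> carrier Y" "p e = f y" using x(1) ey cP by auto
      have "?GY #>\<^bsub>Y\<^esub> y = ?GY" using D(2) nilq_map_coset[OF gP gY sndP x(1)] x ey by simp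
      then have "y \<in> ?GY" using group.coset_join1[OF gY _ ec(2) sGY] by blast
      then have "y \<in> snd ` ?GP" by (simp only: sndG)
      then obtain x' where x': "x' \<in> ?GP" "y = snd x'" by (rule imageE)
      obtain e' where e': "x' = (e', y)" using x'(2) by (cases x') auto
      have x'c: "x' \<in> carrier ?P" using x'(1) subgroup.subset[OF sGP] by blast
      then have e'c: "e' \<in> carrier E" "p e' = f y" using e' cP by auto
      let ?d = "inv\<^bsub>E\<^esub> e' \<otimes>\<^bsub>E\<^esub> e"
      have dc: "?d \<in> carrier E" using ec e'c by simp
      have "p ?d = inv\<^bsub>Q\<^esub> f y \<otimes>\<^bsub>Q\<^esub> f y" using ec e'c by simp
      also have "\<dots> = \<one>\<^bsub>Q\<^esub>" using ec(2) by simp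
      finally have "?d \<in> kernel E Q p" unfolding kernel_def using dc by blast
      then have "?d \<in> i ` carrier N" by (simp only: ker)
      then obtain n where n0: "n \<in> carrier N" "?d = i n" by (rule imageE)
      then have n: "n \<in> carrier N" "i n = ?d" by simp_all
      have "x' \<otimes>\<^bsub>?P\<^esub> ?j n = (e' \<otimes>\<^bsub>E\<^esub> ?d, y \<otimes>\<^bsub>Y\<^esub> \<one>\<^bsub>Y\<^esub>)"
        using e' n PG(3) by simp
      also have "\<dots> = x" using ey ec e'c by (simp add: monoid.m_assoc[OF group.is_monoid[OF gE], symmetric] group.r_inv[OF gE] monoid.l_one[OF group.is_monoid[OF gE]])
      finally have xx: "x = x' \<otimes>\<^bsub>?P\<^esub> ?j n" by simp
      have "D = (?GP #>\<^bsub>?P\<^esub> x') #>\<^bsub>?P\<^esub> ?j n"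
        unfolding x(2) xx using group.coset_mult_assoc[OF gP subgroup.subset[OF sGP] x'c jP[OF n(1)]] by simp
      also have "\<dots> = ?GP #>\<^bsub>?P\<^esub> ?j n"
        using group.coset_join2[OF gP x'c sGP x'(1)] by simp
      finally have "D = nilq_map c N ?P ?j (?GN #>\<^bsub>N\<^esub> n)"
        using nilq_map_coset[OF gN gP jh n(1)] by simp
      moreover have "?GN #>\<^bsub>N\<^esub> n \<in> carrier (nilq c N)" unfolding nilq_carrier using n by blast
      ultimately show "D \<in> nilq_map c N ?P ?j ` carrier (nilq c N)" by blast
    qed
  qed
  show ?thesis unfolding short_exact_def
    by (intro conjI nilq_group gN gP gY mon epi kk)
qed

end
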